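(* Let $S$ be any scheduling rule. If there are p-SLD derivations $G\xrightarrow{S,E}F$ and $F\xrightarrow{S,H}Q$ via $S$, then there is a p-SLD derivation $G\xrightarrow{E}F\xrightarrow{H}R$ via $S$ (whose first part is the given derivation from $G$ to $F$) such that $R$ is a p-variant of $Q$.
   Context: A p-atom is a pair $a[p]$ of an atom $a$ and a rational priority $p$. A p-goal is a finite set of p-atoms with pairwise distinct priorities, regarded as a list ordered by increasing priority. Substitutions act on atoms and leave priorities unchanged. A clause is $h\leftarrow B$ with $h$ an atom and $B$ a p-goal. For p-goals with no common priority, $F+G=F\cup G$; $F|G$ denotes $F+G$ when all priorities of $F$ are smaller than those of $G$. A shifting is a strictly increasing bijection $\mathbb{Q}\to\mathbb{Q}$ acting on priorities. $F$ is a p-variant of $G$ if $F=G\lambda\underline{\sigma}$ for a renaming $\lambda$ and a shifting $\underline{\sigma}$. Priority derivation step: for a p-goal $a|F$ ($a$ of least priority), clause $c=(h\leftarrow B)$, renaming $\xi$ with $var(a|F)\cap var(c\xi)=\emptyset$, idempotent relevant mgu $\theta$ of $a$ and $h\xi$, shifting $\underline{\pi}$ with $F$, $B\xi\underline{\pi}$ sharing no priority: $a|F\xrightarrow{c\xi,\theta}(F+B\xi\underline{\pi})\theta$. A p-SLD derivation is a sequence of such steps with each renamed clause $c_j\xi_j$ variable-disjoint from the initial goal and all earlier renamed clauses; its template is the sequence of applied clauses. Lowering: for $c=(h\leftarrow B)$, a step $a\lambda\underline{\sigma}|(K\lambda\underline{\sigma}+X)\xrightarrow{c}(X+K\lambda\underline{\sigma}+B\xi''\underline{\theta}'')\alpha''$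 is a lowering by $X$ of $a|K\xrightarrow{c}(K+B\xi'\underline{\theta}')\alpha'$; a congruent lowering if some shifting $\underline{\rho}$ has $K\underline{\rho}=K\underline{\sigma}$ and $B\underline{\theta}'\underline{\rho}=B\underline{\theta}''$. Steps are (congruent) lowerings of each other if each is a (congruent) lowering of the other. A set $S$ of steps is deterministic if any two steps of $S$ that are lowerings of each other are congruent lowerings of each other; complete if (i) whenever some step $G\xrightarrow{c}\cdot$ exists, some step $G\xrightarrow{c}\cdot$ lies in $S$, and (ii) $S$ contains every step that is a congruent lowering of each other with a step of $S$. A scheduling rule is a complete deterministic set of steps; a derivation is via $S$ if all its steps lie in $S$, and $G\xrightarrow{S,M}R$ denotes such a derivation with template $M$. *)

theory Defs
  imports Complex_Main
begin

datatype ('f, 'v) fterm = Var 'v | Fn 'f "('f, 'v) fterm list"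

datatype ('f, 'v) atom = Atom 'f "('f, 'v) fterm list"

type_synonym ('f, 'v) subst = "'v \<Rightarrow> ('f, 'v) fterm"

fun tsubst :: "('f, 'v) fterm \<Rightarrow> ('f, 'v) subst \<Rightarrow> ('f, 'v) fterm" where
  "tsubst (Var x) \<theta> = \<theta> x"
| "tsubst (Fn f ts) \<theta> = Fn f (map (\<lambda>t. tsubst t \<theta>) ts)"

fun tvars :: "('f, 'v) fterm \<Rightarrow> 'v set" where
  "tvars (Var x) = {x}"
| "tvars (Fn f ts) = (\<Union>t\<in>set ts. tvars t)"

fun asubst :: "('f, 'v) atom \<Rightarrow> ('f, 'v) subst \<Rightarrow> ('f, 'v) atom" where
  "asubst (Atom p ts) \<theta> = Atom p (map (\<lambda>t. tsubst t \<theta>) ts)"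

fun avars :: "('f, 'v) atom \<Rightarrow> 'v set" where
  "avars (Atom p ts) = (\<Union>t\<in>set ts. tvars t)"

definition scomp :: "('f, 'v) subst \<Rightarrow> ('f, 'v) subst \<Rightarrow> ('f, 'v) subst" where
  "scomp \<theta> \<delta> = (\<lambda>x. tsubst (\<theta> x) \<delta>)"

definition sdom :: "('f, 'v) subst \<Rightarrow> 'v set" where
  "sdom \<theta> = {x. \<theta> x \<noteq> Var x}"

definition svars :: "('f, 'v) subst \<Rightarrow> 'v set" where
  "svars \<theta> = sdom \<theta> \<union> (\<Union>x\<in>sdom \<theta>. tvars (\<theta> x))"

definition unifier :: "('f, 'v) subst \<Rightarrow> ('f, 'v) atom \<Rightarrow> ('f, 'v) atom \<Rightarrow> bool" where
  "unifier \<theta> a b \<longleftrightarrow> asubst a \<theta> = asubst b \<theta>"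

definition is_mgu :: "('f, 'v) subst \<Rightarrow> ('f, 'v) atom \<Rightarrow> ('f, 'v) atom \<Rightarrow> bool" where
  "is_mgu \<theta> a b \<longleftrightarrow> unifier \<theta> a b \<and>
     (\<forall>\<delta>. unifier \<delta> a b \<longrightarrow> (\<exists>\<gamma>. \<delta> = scomp \<theta> \<gamma>))"

definition idem_relevant_mgu :: "('f, 'v) subst \<Rightarrow> ('f, 'v) atom \<Rightarrow> ('f, 'v) atom \<Rightarrow> bool" where
  "idem_relevant_mgu \<theta> a b \<longleftrightarrow> is_mgu \<theta> a b \<and> scomp \<theta> \<theta> = \<theta> \<and>
     svars \<theta> \<subseteq> avars a \<union> avars b"

definition ren :: "('v \<Rightarrow> 'v) \<Rightarrow> ('f, 'v) subst" where
  "ren \<xi> = (\<lambda>x. Var (\<xi> x))"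

type_synonym ('f, 'v) pgoal = "(('f, 'v) atom \<times> rat) set"

definition is_pgoal :: "('f, 'v) pgoal \<Rightarrow> bool" where
  "is_pgoal G \<longleftrightarrow> finite G \<and> inj_on snd G"

definition prios :: "('f, 'v) pgoal \<Rightarrow> rat set" where
  "prios G = snd ` G"

definition gvars :: "('f, 'v) pgoal \<Rightarrow> 'v set" where
  "gvars G = (\<Union>(a, p)\<in>G. avars a)"

definition gsubst :: "('f, 'v) pgoal \<Rightarrow> ('f, 'v) subst \<Rightarrow> ('f, 'v) pgoal" where
  "gsubst G \<theta> = (\<lambda>(a, p). (asubst a \<theta>, p)) ` G"

definition shifting :: "(rat \<Rightarrow> rat) \<Rightarrow> bool" where
  "shifting \<sigma> \<longleftrightarrow> strict_mono \<sigma> \<and> bij \<sigma>"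

definition gshift :: "('f, 'v) pgoal \<Rightarrow> (rat \<Rightarrow> rat) \<Rightarrow> ('f, 'v) pgoal" where
  "gshift G \<sigma> = (\<lambda>(a, p). (a, \<sigma> p)) ` G"

definition p_variant :: "('f, 'v) pgoal \<Rightarrow> ('f, 'v) pgoal \<Rightarrow> bool" where
  "p_variant G H \<longleftrightarrow> (\<exists>l \<sigma>. bij l \<and> shifting \<sigma> \<and> G = gshift (gsubst H (ren l)) \<sigma>)"

definition split_least :: "('f, 'v) pgoal \<Rightarrow> ('f, 'v) atom \<Rightarrow> rat \<Rightarrow> ('f, 'v) pgoal \<Rightarrow> bool" where
  "split_least G a p F \<longleftrightarrow> G = insert (a, p) F \<and> (\<forall>q\<in>prios F. p < q)"

datatype ('f, 'v) clause = Clause (chead: "('f, 'v) atom") (cbody: "('f, 'v) pgoal")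

definition crename :: "('f, 'v) clause \<Rightarrow> ('v \<Rightarrow> 'v) \<Rightarrow> ('f, 'v) clause" where
  "crename c \<xi> = Clause (asubst (chead c) (ren \<xi>)) (gsubst (cbody c) (ren \<xi>))"

definition cvars :: "('f, 'v) clause \<Rightarrow> 'v set" where
  "cvars c = avars (chead c) \<union> gvars (cbody c)"

datatype ('f, 'v) step = Step
  (ssrc: "('f, 'v) pgoal") (scl: "('f, 'v) clause") (sren: "'v \<Rightarrow> 'v")
  (smgu: "('f, 'v) subst") (sshift: "rat \<Rightarrow> rat") (stgt: "('f, 'v) pgoal")

definition valid_step :: "('f, 'v) step \<Rightarrow> bool" where
  "valid_step s \<longleftrightarrow> is_pgoal (ssrc s) \<and> is_pgoal (cbody (scl s)) \<and>
     bij (sren s) \<and> shifting (sshift s) \<and>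
     gvars (ssrc s) \<inter> cvars (crename (scl s) (sren s)) = {} \<and>
     (\<exists>a p F. split_least (ssrc s) a p F \<and>
        idem_relevant_mgu (smgu s) a (chead (crename (scl s) (sren s))) \<and>
        prios F \<inter> prios (gshift (cbody (crename (scl s) (sren s))) (sshift s)) = {} \<and>
        stgt s = gsubst (F \<union> gshift (cbody (crename (scl s) (sren s))) (sshift s)) (smgu s))"

definition lowering_with ::
  "('f, 'v) step \<Rightarrow> ('f, 'v) step \<Rightarrow> ('f, 'v) pgoal \<Rightarrow> ('v \<Rightarrow> 'v) \<Rightarrow> (rat \<Rightarrow> rat)
     \<Rightarrow> ('f, 'v) atom \<Rightarrow> rat \<Rightarrow> ('f, 'v) pgoal \<Rightarrow> bool" where
  "lowering_with s2 s1 X l \<sigma> a p K \<longleftrightarrow>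
     valid_step s1 \<and> valid_step s2 \<and> scl s2 = scl s1 \<and> bij l \<and> shifting \<sigma> \<and>
     is_pgoal X \<and> split_least (ssrc s1) a p K \<and>
     prios X \<inter> prios (gshift (gsubst K (ren l)) \<sigma>) = {} \<and>
     split_least (ssrc s2) (asubst a (ren l)) (\<sigma> p) (gshift (gsubst K (ren l)) \<sigma> \<union> X)"

definition is_lowering :: "('f, 'v) step \<Rightarrow> ('f, 'v) step \<Rightarrow> bool" where
  "is_lowering s2 s1 \<longleftrightarrow> (\<exists>X l \<sigma> a p K. lowering_with s2 s1 X l \<sigma> a p K)"

definition is_congruent_lowering :: "('f, 'v) step \<Rightarrow> ('f, 'v) step \<Rightarrow> bool" where
  "is_congruent_lowering s2 s1 \<longleftrightarrow> (\<exists>X l \<sigma> a p K \<rho>. lowering_with s2 s1 X l \<sigma> a p K \<and>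
     shifting \<rho> \<and> gshift K \<rho> = gshift K \<sigma> \<and>
     gshift (gshift (cbody (scl s1)) (sshift s1)) \<rho> = gshift (cbody (scl s1)) (sshift s2))"

definition mutual_lowerings :: "('f, 'v) step \<Rightarrow> ('f, 'v) step \<Rightarrow> bool" where
  "mutual_lowerings s t \<longleftrightarrow> is_lowering s t \<and> is_lowering t s"

definition mutual_congruent_lowerings :: "('f, 'v) step \<Rightarrow> ('f, 'v) step \<Rightarrow> bool" where
  "mutual_congruent_lowerings s t \<longleftrightarrow> is_congruent_lowering s t \<and> is_congruent_lowering t s"

definition deterministic :: "('f, 'v) step set \<Rightarrow> bool" where
  "deterministic S \<longleftrightarrow> (\<forall>s\<in>S. \<forall>t\<in>S. mutual_lowerings s t \<longrightarrow> mutual_congruent_lowerings s t)"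

definition complete :: "('f, 'v) step set \<Rightarrow> bool" where
  "complete S \<longleftrightarrow>
     (\<forall>G c. (\<exists>s. valid_step s \<and> ssrc s = G \<and> scl s = c) \<longrightarrow> (\<exists>s\<in>S. ssrc s = G \<and> scl s = c)) \<and>
     (\<forall>s\<in>S. \<forall>t. valid_step t \<and> mutual_congruent_lowerings t s \<longrightarrow> t \<in> S)"

definition scheduling_rule :: "('f, 'v) step set \<Rightarrow> bool" where
  "scheduling_rule S \<longleftrightarrow> (\<forall>s\<in>S. valid_step s) \<and> complete S \<and> deterministic S"

fun chain :: "('f, 'v) pgoal \<Rightarrow> ('f, 'v) step list \<Rightarrow> ('f, 'v) pgoal \<Rightarrow> bool" where
  "chain G [] R \<longleftrightarrow> R = G"
| "chain G (s # ds) R \<longleftrightarrow> ssrc s = G \<and> valid_step s \<and> chain (stgt s) ds R"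

definition rclause :: "('f, 'v) step \<Rightarrow> ('f, 'v) clause" where
  "rclause s = crename (scl s) (sren s)"

definition pSLD :: "('f, 'v) pgoal \<Rightarrow> ('f, 'v) step list \<Rightarrow> ('f, 'v) pgoal \<Rightarrow> bool" where
  "pSLD G ds R \<longleftrightarrow> chain G ds R \<and>
     (\<forall>j<length ds. cvars (rclause (ds ! j)) \<inter> gvars G = {} \<and>
        (\<forall>i<j. cvars (rclause (ds ! j)) \<inter> cvars (rclause (ds ! i)) = {}))"

definition template :: "('f, 'v) step list \<Rightarrow> ('f, 'v) clause list" where
  "template ds = map scl ds"

definition deriv_via :: "('f, 'v) step set \<Rightarrow> ('f, 'v) pgoal \<Rightarrow> ('f, 'v) step list
    \<Rightarrow> ('f, 'v) clause list \<Rightarrow> ('f, 'v) pgoal \<Rightarrow> bool" where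
  "deriv_via S G ds M R \<longleftrightarrow> pSLD G ds R \<and> set ds \<subseteq> S \<and> template ds = M"

end

theory Submission
  imports Defs
begin


lemma tsubst_comp: "tsubst (tsubst t \<sigma>) \<tau> = tsubst t (scomp \<sigma> \<tau>)"
  by (induction t) (auto simp: scomp_def)

lemma asubst_comp: "asubst (asubst a \<sigma>) \<tau> = asubst a (scomp \<sigma> \<tau>)"
  by (cases a) (simp add: tsubst_comp)

lemma gsubst_comp: "gsubst (gsubst G \<sigma>) \<tau> = gsubst G (scomp \<sigma> \<tau>)"
  unfolding gsubst_def by (simp add: image_image case_prod_beta asubst_comp)

lemma scomp_ren: "scomp (ren f) (ren g) = ren (g \<circ> f)"
  by (simp add: scomp_def ren_def fun_eq_iff)

lemma tsubst_Var[simp]: "tsubst t Var = t"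
  by (induction t) (auto intro: map_idI)

lemma asubst_Var[simp]: "asubst a Var = a"
  by (cases a) (auto intro: map_idI)

lemma gsubst_Var[simp]: "gsubst G Var = G"
  unfolding gsubst_def by (simp add: case_prod_beta)

lemma scomp_Var_r[simp]: "scomp \<sigma> Var = \<sigma>" by (simp add: scomp_def)
lemma scomp_Var_l[simp]: "scomp Var \<sigma> = \<sigma>" by (simp add: scomp_def)
lemma scomp_assoc: "scomp (scomp a b) c = scomp a (scomp b c)"
  by (simp add: scomp_def fun_eq_iff tsubst_comp)

lemma ren_id[simp]: "ren id = Var" by (simp add: ren_def fun_eq_iff)

lemma tsubst_cong: "(\<forall>x\<in>tvars t. \<sigma> x = \<tau> x) \<Longrightarrow> tsubst t \<sigma> = tsubst t \<tau>"
  by (induction t) auto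

lemma asubst_cong: "(\<forall>x\<in>avars a. \<sigma> x = \<tau> x) \<Longrightarrow> asubst a \<sigma> = asubst a \<tau>"
  by (cases a) (auto intro: tsubst_cong)

lemma gsubst_fix: "(\<forall>x\<in>gvars G. \<sigma> x = Var x) \<Longrightarrow> gsubst G \<sigma> = G"
proof -
  assume h: "\<forall>x\<in>gvars G. \<sigma> x = Var x"
  have "\<And>a p. (a,p) \<in> G \<Longrightarrow> asubst a \<sigma> = a"
    using h asubst_cong[of _ \<sigma> Var] unfolding gvars_def by fastforce
  then show ?thesis unfolding gsubst_def by (force simp: image_iff)
qed

lemma tvars_ren: "tvars (tsubst t (ren l)) = l ` tvars t"
  by (induction t) (auto simp: ren_def)

lemma avars_ren: "avars (asubst a (ren l)) = l ` avars a"
  by (cases a) (auto simp: tvars_ren)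

lemma gvars_ren: "gvars (gsubst G (ren l)) = l ` gvars G"
  unfolding gvars_def gsubst_def by (force simp: avars_ren)

lemma finite_tvars: "finite (tvars t)" by (induction t) auto
lemma finite_avars: "finite (avars a)" by (cases a) (auto simp: finite_tvars)
lemma finite_gvars: "finite G \<Longrightarrow> finite (gvars G)"
  unfolding gvars_def by (auto simp: finite_avars)

lemma prios_gsubst[simp]: "prios (gsubst G \<sigma>) = prios G"
  unfolding prios_def gsubst_def by (force simp: image_image case_prod_beta)

lemma gsubst_Un: "gsubst (A \<union> B) \<sigma> = gsubst A \<sigma> \<union> gsubst B \<sigma>"
  unfolding gsubst_def by auto

lemma gsubst_insert: "gsubst (insert (a,p) B) \<sigma> = insert (asubst a \<sigma>, p) (gsubst B \<sigma>)"
  unfolding gsubst_def by auto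

lemma gshift_id[simp]: "gshift G id = G"
  unfolding gshift_def by (simp add: case_prod_beta)

lemma gshift_gsubst: "gshift (gsubst B \<sigma>) \<pi> = gsubst (gshift B \<pi>) \<sigma>"
  unfolding gshift_def gsubst_def by (simp add: image_image case_prod_beta)

lemma is_pgoal_gsubst: "is_pgoal G \<Longrightarrow> is_pgoal (gsubst G \<sigma>)"
  unfolding is_pgoal_def gsubst_def inj_on_def by fastforce

lemma split_least_gsubst: "split_least G a p F \<Longrightarrow> split_least (gsubst G \<sigma>) (asubst a \<sigma>) p (gsubst F \<sigma>)"
  unfolding split_least_def by (simp add: gsubst_insert)

lemma ren_inv_cancel: "inj l \<Longrightarrow> scomp (ren l) (ren (inv l)) = Var"
  by (simp add: scomp_ren)

lemma ren_inv_cancel2: "surj l \<Longrightarrow> scomp (ren (inv l)) (ren l) = Var"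
  by (simp add: scomp_ren surj_iff)

lemma crename_comp: "crename c (l \<circ> \<xi>) = Clause (asubst (chead (crename c \<xi>)) (ren l)) (gsubst (cbody (crename c \<xi>)) (ren l))"
  by (simp add: crename_def asubst_comp gsubst_comp scomp_ren)

lemma cvars_crename: "cvars (crename c \<xi>) = \<xi> ` cvars c"
  by (simp add: crename_def cvars_def avars_ren gvars_ren image_Un)



definition conjs :: "('v \<Rightarrow> 'v) \<Rightarrow> ('f, 'v) subst \<Rightarrow> ('f, 'v) subst" where
  "conjs l \<theta> = scomp (ren (inv l)) (scomp \<theta> (ren l))"

lemma conjs_key: "bij l \<Longrightarrow> scomp (ren l) (conjs l \<theta>) = scomp \<theta> (ren l)"
  unfolding conjs_def
  by (simp add: scomp_assoc[symmetric] ren_inv_cancel bij_is_inj)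

lemma ren_cancel_l: "inj l \<Longrightarrow> scomp (ren l) (scomp (ren (inv l)) g) = g"
  by (simp add: scomp_assoc[symmetric] ren_inv_cancel)

lemma ren_cancel_l2: "surj l \<Longrightarrow> scomp (ren (inv l)) (scomp (ren l) g) = g"
  by (simp add: scomp_assoc[symmetric] ren_inv_cancel2)

lemma tsubst_ren_inj: "inj l \<Longrightarrow> tsubst s (ren l) = tsubst t (ren l) \<Longrightarrow> s = t"
proof -
  assume i: "inj l" and e: "tsubst s (ren l) = tsubst t (ren l)"
  have "\<And>u. tsubst (tsubst u (ren l)) (ren (inv l)) = u" by (simp add: tsubst_comp ren_inv_cancel[OF i])
  note c = this
  from e have "tsubst (tsubst s (ren l)) (ren (inv l)) = tsubst (tsubst t (ren l)) (ren (inv l))"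
    by (rule arg_cong)
  then show ?thesis unfolding c .
qed

lemma conjs_apply: "bij l \<Longrightarrow> conjs l \<theta> (l y) = tsubst (\<theta> y) (ren l)"
  by (simp add: conjs_def scomp_def ren_def bij_is_inj)

lemma sdom_conjs: "bij l \<Longrightarrow> sdom (conjs l \<theta>) = l ` sdom \<theta>"
proof -
  assume b: "bij l"
  have i: "inj l" using b by (rule bij_is_inj)
  have e: "conjs l \<theta> (l y) = Var (l y) \<longleftrightarrow> \<theta> y = Var y" for y
  proof
    assume "conjs l \<theta> (l y) = Var (l y)"
    then have "tsubst (\<theta> y) (ren l) = tsubst (Var y) (ren l)" by (simp add: conjs_apply[OF b] ren_def)
    then show "\<theta> y = Var y" by (rule tsubst_ren_inj[OF i])
  next
    assume "\<theta> y = Var y"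
    then show "conjs l \<theta> (l y) = Var (l y)" by (simp add: conjs_apply[OF b] ren_def)
  qed
  show ?thesis
  proof (intro set_eqI)
    fix x
    have y: "x = l (inv l x)" using b by (simp add: bij_is_surj surj_f_inv_f)
    have "x \<in> sdom (conjs l \<theta>) \<longleftrightarrow> inv l x \<in> sdom \<theta>"
      unfolding sdom_def using e[of "inv l x"] y by simp
    also have "\<dots> \<longleftrightarrow> x \<in> l ` sdom \<theta>"
      using y inj_image_mem_iff[OF i] by metis
    finally show "x \<in> sdom (conjs l \<theta>) \<longleftrightarrow> x \<in> l ` sdom \<theta>" .
  qed
qed

lemma svars_conjs: "bij l \<Longrightarrow> svars (conjs l \<theta>) = l ` svars \<theta>"
proof -
  assume b: "bij l"
  have "svars (conjs l \<theta>) = l ` sdom \<theta> \<union> (\<Union>x\<in>l ` sdom \<theta>. tvars (conjs l \<theta> x))"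
    unfolding svars_def sdom_conjs[OF b] ..
  also have "(\<Union>x\<in>l ` sdom \<theta>. tvars (conjs l \<theta> x)) = (\<Union>y\<in>sdom \<theta>. l ` tvars (\<theta> y))"
    by (simp add: conjs_apply[OF b] tvars_ren)
  finally show ?thesis unfolding svars_def by (simp add: image_Un image_UN)
qed

lemma mgu_conjs:
  assumes b: "bij l" and m: "idem_relevant_mgu \<theta> a b"
  shows "idem_relevant_mgu (conjs l \<theta>) (asubst a (ren l)) (asubst b (ren l))"
proof -
  have i: "inj l" "surj l" using b bij_is_inj bij_is_surj by auto
  have u: "unifier \<theta> a b" and g: "\<forall>\<delta>. unifier \<delta> a b \<longrightarrow> (\<exists>\<gamma>. \<delta> = scomp \<theta> \<gamma>)"
    and id: "scomp \<theta> \<theta> = \<theta>" and r: "svars \<theta> \<subseteq> avars a \<union> avars b"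
    using m unfolding idem_relevant_mgu_def is_mgu_def by auto
  have u': "unifier (conjs l \<theta>) (asubst a (ren l)) (asubst b (ren l))"
  proof -
    from u have "asubst (asubst a \<theta>) (ren l) = asubst (asubst b \<theta>) (ren l)" unfolding unifier_def by simp
    then show ?thesis unfolding unifier_def by (simp add: asubst_comp conjs_key[OF b])
  qed
  have g': "\<exists>\<gamma>. \<delta> = scomp (conjs l \<theta>) \<gamma>" if "unifier \<delta> (asubst a (ren l)) (asubst b (ren l))" for \<delta>
  proof -
    have "unifier (scomp (ren l) \<delta>) a b" using that unfolding unifier_def by (simp add: asubst_comp)
    then obtain \<gamma> where \<gamma>: "scomp (ren l) \<delta> = scomp \<theta> \<gamma>" using g by blast
    have "\<delta> = scomp (ren (inv l)) (scomp (ren l) \<delta>)"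
      by (simp add: ren_cancel_l2 i)
    also have "\<dots> = scomp (conjs l \<theta>) (scomp (ren (inv l)) \<gamma>)"
      unfolding \<gamma> conjs_def by (simp add: scomp_assoc ren_cancel_l[OF i(1)])
    finally show ?thesis by blast
  qed
  have id': "scomp (conjs l \<theta>) (conjs l \<theta>) = conjs l \<theta>"
  proof -
    have t: "scomp \<theta> (scomp \<theta> X) = scomp \<theta> X" for X
      by (metis scomp_assoc id)
    show ?thesis unfolding conjs_def by (simp add: scomp_assoc ren_cancel_l[OF i(1)] t)
  qed
  have r': "svars (conjs l \<theta>) \<subseteq> avars (asubst a (ren l)) \<union> avars (asubst b (ren l))"
    using r by (auto simp: svars_conjs[OF b] avars_ren)
  show ?thesis unfolding idem_relevant_mgu_def is_mgu_def using u' g' id' r' by blast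
qed

definition tstep :: "('v \<Rightarrow> 'v) \<Rightarrow> ('f, 'v) step \<Rightarrow> ('f, 'v) step" where
  "tstep l s = Step (gsubst (ssrc s) (ren l)) (scl s) (l \<circ> sren s) (conjs l (smgu s)) (sshift s)
     (gsubst (stgt s) (ren l))"

lemma tstep_sel[simp]: "ssrc (tstep l s) = gsubst (ssrc s) (ren l)" "scl (tstep l s) = scl s"
  "sren (tstep l s) = l \<circ> sren s" "smgu (tstep l s) = conjs l (smgu s)"
  "sshift (tstep l s) = sshift s" "stgt (tstep l s) = gsubst (stgt s) (ren l)"
  by (simp_all add: tstep_def)

lemma rclause_tstep: "cvars (rclause (tstep l s)) = l ` cvars (rclause s)"
  unfolding rclause_def by (simp add: cvars_crename image_comp)

lemma valid_tstep:
  assumes b: "bij l" and v: "valid_step s"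
  shows "valid_step (tstep l s)"
proof -
  obtain a p F where sl: "split_least (ssrc s) a p F"
    and m: "idem_relevant_mgu (smgu s) a (chead (crename (scl s) (sren s)))"
    and pr: "prios F \<inter> prios (gshift (cbody (crename (scl s) (sren s))) (sshift s)) = {}"
    and tg: "stgt s = gsubst (F \<union> gshift (cbody (crename (scl s) (sren s))) (sshift s)) (smgu s)"
    using v unfolding valid_step_def by blast
  have i: "inj l" using b bij_is_inj by auto
  let ?C = "crename (scl s) (sren s)"
  have hd: "chead (crename (scl s) (l \<circ> sren s)) = asubst (chead ?C) (ren l)"
   and bd: "cbody (crename (scl s) (l \<circ> sren s)) = gsubst (cbody ?C) (ren l)"
    by (simp_all add: crename_comp)
  have "gvars (ssrc s) \<inter> cvars ?C = {}" using v unfolding valid_step_def by blast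
  then have dj: "gvars (gsubst (ssrc s) (ren l)) \<inter> cvars (crename (scl s) (l \<circ> sren s)) = {}"
  proof -
    have "cvars (crename (scl s) (l \<circ> sren s)) = l ` cvars ?C"
      by (simp add: crename_comp cvars_def avars_ren gvars_ren image_Un)
    then show ?thesis using \<open>gvars (ssrc s) \<inter> cvars ?C = {}\<close>
      by (simp add: gvars_ren image_Int[OF i, symmetric])
  qed
  have tg': "gsubst (stgt s) (ren l) = gsubst (gsubst F (ren l) \<union> gshift (gsubst (cbody ?C) (ren l)) (sshift s)) (conjs l (smgu s))"
    unfolding tg by (simp add: gshift_gsubst gsubst_Un[symmetric] gsubst_comp conjs_key[OF b])
  have pr': "prios (gsubst F (ren l)) \<inter> prios (gshift (gsubst (cbody ?C) (ren l)) (sshift s)) = {}"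
    using pr by (simp add: gshift_gsubst)
  have v0: "is_pgoal (ssrc s)" "is_pgoal (cbody (scl s))" "bij (sren s)" "shifting (sshift s)"
    using v unfolding valid_step_def by auto
  show ?thesis unfolding valid_step_def tstep_sel hd bd
  proof (intro conjI exI)
    show "is_pgoal (gsubst (ssrc s) (ren l))" using v0(1) by (rule is_pgoal_gsubst)
    show "bij (l \<circ> sren s)" using b v0 by (simp add: bij_comp)
  qed (use v0 dj split_least_gsubst[OF sl] mgu_conjs[OF b m] pr' tg' in auto)
qed



lemma shifting_id: "shifting id"
  by (simp add: shifting_def strict_mono_def)

lemma gsubst_inv_cancel: "bij l \<Longrightarrow> gsubst (gsubst G (ren l)) (ren (inv l)) = G"
  by (simp add: gsubst_comp ren_inv_cancel bij_is_inj)

lemma asubst_inv_cancel: "bij l \<Longrightarrow> asubst (asubst a (ren l)) (ren (inv l)) = a"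
  by (simp add: asubst_comp ren_inv_cancel bij_is_inj)

lemma tstep_in_S:
  assumes S: "scheduling_rule S" and b: "bij l" and s: "s \<in> S"
  shows "tstep l s \<in> S"
proof -
  have v: "valid_step s" using S s unfolding scheduling_rule_def by blast
  have vt: "valid_step (tstep l s)" using valid_tstep[OF b v] .
  obtain a p K where sl: "split_least (ssrc s) a p K" using v unfolding valid_step_def by blast
  have e0: "is_pgoal {}" unfolding is_pgoal_def by simp
  have e1: "prios {} = {}" unfolding prios_def by simp
  have sl1: "split_least (ssrc (tstep l s)) (asubst a (ren l)) p (gsubst K (ren l))"
    using split_least_gsubst[OF sl] by simp
  have sl2: "split_least (ssrc s) (asubst (asubst a (ren l)) (ren (inv l))) p (gsubst (gsubst K (ren l)) (ren (inv l)))"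
    using split_least_gsubst[OF sl1, of "ren (inv l)"] by (simp add: gsubst_inv_cancel[OF b])
  have bi: "bij (inv l)" using b by (rule bij_imp_bij_inv)
  have L1: "lowering_with (tstep l s) s {} l id a p K"
    unfolding lowering_with_def using v vt b shifting_id sl sl1 by (simp add: e0 e1)
  have L2: "lowering_with s (tstep l s) {} (inv l) id (asubst a (ren l)) p (gsubst K (ren l))"
    unfolding lowering_with_def using v vt bi shifting_id sl1 sl2 by (simp add: e0 e1)
  have "is_congruent_lowering (tstep l s) s"
    unfolding is_congruent_lowering_def using L1 shifting_id by fastforce
  moreover have "is_congruent_lowering s (tstep l s)"
    unfolding is_congruent_lowering_def using L2 shifting_id by fastforce
  ultimately have "mutual_congruent_lowerings (tstep l s) s"
    unfolding mutual_congruent_lowerings_def by blast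
  then show ?thesis using S s vt unfolding scheduling_rule_def complete_def by blast
qed

lemma chain_tstep: "bij l \<Longrightarrow> chain G ds R \<Longrightarrow> chain (gsubst G (ren l)) (map (tstep l) ds) (gsubst R (ren l))"
  by (induction ds arbitrary: G) (auto simp: valid_tstep)

lemma chain_append: "chain G xs M \<Longrightarrow> chain M ys R \<Longrightarrow> chain G (xs @ ys) R"
  by (induction xs arbitrary: G) auto

lemma chain_pgoal: "chain G ds R \<Longrightarrow> ds \<noteq> [] \<Longrightarrow> is_pgoal G"
  by (cases ds) (auto simp: valid_step_def)

lemma finite_cvars_rclause: "valid_step s \<Longrightarrow> finite (cvars (rclause s))"
proof -
  assume "valid_step s"
  then have "finite (cbody (scl s))" unfolding valid_step_def is_pgoal_def by blast
  then have "finite (cvars (scl s))" unfolding cvars_def by (simp add: finite_gvars finite_avars)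
  then show ?thesis unfolding rclause_def cvars_crename by simp
qed



theorem mainTheorem9:
  fixes S :: "('f, 'v) step set"
  assumes "infinite (UNIV :: 'v set)"
    and "scheduling_rule S"
    and "deriv_via S G d1 E F"
    and "deriv_via S F d2 H Q"
  shows "\<exists>d3 R. deriv_via S G (d1 @ d3) (E @ H) R \<and> deriv_via S F d3 H R \<and> p_variant R Q"
proof -
  have p1: "pSLD G d1 F" and s1: "set d1 \<subseteq> S" and t1: "template d1 = E"
    using assms(3) unfolding deriv_via_def by auto
  have p2: "pSLD F d2 Q" and s2: "set d2 \<subseteq> S" and t2: "template d2 = H"
    using assms(4) unfolding deriv_via_def by auto
  have vS: "\<And>s. s \<in> S \<Longrightarrow> valid_step s" using assms(2) unfolding scheduling_rule_def by blast
  show ?thesis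
  proof (cases "d2 = []")
    case True
    then have "Q = F" "H = []" using p2 t2 unfolding pSLD_def template_def by auto
    moreover have "p_variant F F" unfolding p_variant_def
      using shifting_id by (intro exI[of _ id] exI[of _ id]) simp
    moreover have "deriv_via S F [] [] F" unfolding deriv_via_def pSLD_def template_def by simp
    ultimately show ?thesis using assms(3) by (intro exI[of _ "[]"] exI[of _ F]) simp
  next
    case False
    have pgF: "is_pgoal F" using chain_pgoal False p2 unfolding pSLD_def by blast
    have pgG: "is_pgoal G"
    proof (cases "d1 = []")
      case True then show ?thesis using p1 pgF unfolding pSLD_def by simp
    next
      case False then show ?thesis using chain_pgoal p1 unfolding pSLD_def by blast
    qed
    define U where "U = (\<Union>s\<in>set d2. cvars (rclause s))"
    define D1 where "D1 = (\<Union>s\<in>set d1. cvars (rclause s))"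
    define W where "W = gvars G \<union> D1 \<union> gvars F \<union> U"
    have fU: "finite U" unfolding U_def using s2 vS finite_cvars_rclause by blast
    have fD1: "finite D1" unfolding D1_def using s1 vS finite_cvars_rclause by blast
    have fW: "finite W" unfolding W_def using fU fD1 pgF pgG finite_gvars
      unfolding is_pgoal_def by blast
    have "infinite (- W)"
    proof
      assume "finite (- W)"
      then have "finite (W \<union> - W)" using fW by blast
      then show False using assms(1) by simp
    qed
    then obtain U' where fU': "finite U'" and cU': "card U' = card U" and U'W: "U' \<subseteq> - W"
      using infinite_arbitrarily_large by blast
    obtain f where bf: "bij_betw f U U'" using finite_same_card_bij[OF fU fU' cU'[symmetric]] by blast
    define l where "l x = (if x \<in> U then f x else if x \<in> U' then inv_into U f x else x)" for x
    have UW: "U \<subseteq> W" unfolding W_def by blast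
    have fU'': "x \<in> U \<Longrightarrow> f x \<in> U'" for x using bf bij_betw_apply by fast
    have ll: "l (l x) = x" for x
    proof -
      consider "x \<in> U" | "x \<notin> U" "x \<in> U'" | "x \<notin> U" "x \<notin> U'" by blast
      then show ?thesis
      proof cases
        case 1
        then have "f x \<in> U'" "f x \<notin> U" using fU'' U'W UW by auto
        then show ?thesis using 1 bf unfolding l_def by (simp add: bij_betw_inv_into_left)
      next
        case 2
        then have "inv_into U f x \<in> U" using bf by (metis bij_betw_def inv_into_into)
        then show ?thesis using 2 bf unfolding l_def by (simp add: bij_betw_inv_into_right)
      next
        case 3 then show ?thesis unfolding l_def by simp
      qed
    qed
    have bl: "bij l" using ll by (rule involuntory_imp_bij)
    have il: "inj l" using bl by (rule bij_is_inj)
    have lU: "x \<in> U \<Longrightarrow> l x \<in> U'" for x unfolding l_def using fU'' by simp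
    have gFU: "gvars F \<inter> U = {}"
    proof -
      have "\<forall>s\<in>set d2. cvars (rclause s) \<inter> gvars F = {}"
        using p2 unfolding pSLD_def by (metis in_set_conv_nth)
      then show ?thesis unfolding U_def by blast
    qed
    have fixF: "x \<in> gvars F \<Longrightarrow> l x = x" for x
      using gFU U'W unfolding l_def W_def by auto
    define d3 where "d3 = map (tstep l) d2"
    define R where "R = gsubst Q (ren l)"
    have F': "gsubst F (ren l) = F" by (rule gsubst_fix) (simp add: ren_def fixF)
    have ch3: "chain F d3 R"
      using chain_tstep[OF bl, of F d2 Q] p2 F' unfolding pSLD_def d3_def R_def by simp
    have cv: "j < length d3 \<Longrightarrow> cvars (rclause (d3 ! j)) = l ` cvars (rclause (d2 ! j))" for j
      unfolding d3_def by (simp add: rclause_tstep)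
    have cvU': "j < length d3 \<Longrightarrow> cvars (rclause (d3 ! j)) \<subseteq> U'" for j
    proof -
      assume j: "j < length d3"
      then have "d2 ! j \<in> set d2" unfolding d3_def by simp
      then have "cvars (rclause (d2 ! j)) \<subseteq> U" unfolding U_def by blast
      then have "l ` cvars (rclause (d2 ! j)) \<subseteq> U'"
      proof (intro image_subsetI)
        fix x assume "cvars (rclause (d2 ! j)) \<subseteq> U" "x \<in> cvars (rclause (d2 ! j))"
        then have "x \<in> U" by (rule subsetD)
        then show "l x \<in> U'" by (rule lU)
      qed
      then show ?thesis unfolding cv[OF j] .
    qed
    have dW: "j < length d3 \<Longrightarrow> cvars (rclause (d3 ! j)) \<inter> W = {}" for j
    proof -
      assume "j < length d3"
      from cvU'[OF this] U'W show ?thesis by blast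
    qed
    have dd: "j < length d3 \<Longrightarrow> i < j \<Longrightarrow> cvars (rclause (d3 ! j)) \<inter> cvars (rclause (d3 ! i)) = {}" for i j
    proof -
      assume j: "j < length d3" and ij: "i < j"
      have "cvars (rclause (d2 ! j)) \<inter> cvars (rclause (d2 ! i)) = {}"
        using p2 j ij unfolding pSLD_def d3_def by simp
      then show ?thesis using cv[OF j] cv[of i] j ij il by (simp add: image_Int[symmetric])
    qed
    have pS3: "pSLD F d3 R" unfolding pSLD_def using ch3 dW dd unfolding W_def by blast
    have set3: "set d3 \<subseteq> S" unfolding d3_def using s2 tstep_in_S[OF assms(2) bl] by auto
    have tm3: "template d3 = H" using t2 unfolding d3_def template_def by (simp add: comp_def)
    have chA: "chain G (d1 @ d3) R" using p1 ch3 chain_append unfolding pSLD_def by blast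
    have frA: "cvars (rclause ((d1 @ d3) ! j)) \<inter> gvars G = {} \<and>
        (\<forall>i<j. cvars (rclause ((d1 @ d3) ! j)) \<inter> cvars (rclause ((d1 @ d3) ! i)) = {})"
      if j: "j < length (d1 @ d3)" for j
    proof (cases "j < length d1")
      case True
      then show ?thesis using p1 unfolding pSLD_def by (simp add: nth_append)
    next
      case False
      define k where "k = j - length d1"
      have k: "k < length d3" "j = length d1 + k" using j False unfolding k_def by auto
      have e: "(d1 @ d3) ! j = d3 ! k" using k by (simp add: nth_append)
      have A: "cvars (rclause (d3 ! k)) \<inter> gvars G = {}" using dW[OF k(1)] unfolding W_def by blast
      have B: "cvars (rclause (d3 ! k)) \<inter> cvars (rclause ((d1 @ d3) ! i)) = {}" if i: "i < j" for i
      proof (cases "i < length d1")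
        case True
        then have "(d1 @ d3) ! i = d1 ! i" "d1 ! i \<in> set d1" by (simp_all add: nth_append)
        then have "cvars (rclause ((d1 @ d3) ! i)) \<subseteq> D1" unfolding D1_def
          by (metis UN_upper)
        moreover have "D1 \<subseteq> W" unfolding W_def by blast
        ultimately show ?thesis using dW[OF k(1)] by blast
      next
        case False
        then have "(d1 @ d3) ! i = d3 ! (i - length d1)" "i - length d1 < k" using i k
          by (auto simp: nth_append)
        then show ?thesis using dd[OF k(1)] by simp
      qed
      show ?thesis using A B e by simp
    qed
    have pSA: "pSLD G (d1 @ d3) R" unfolding pSLD_def using chA frA by blast
    have "deriv_via S G (d1 @ d3) (E @ H) R"
      unfolding deriv_via_def using pSA s1 set3 t1 tm3 by (simp add: template_def)
    moreover have "deriv_via S F d3 H R" unfolding deriv_via_def using pS3 set3 tm3 by simp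
    moreover have "p_variant R Q" unfolding p_variant_def R_def
      using bl shifting_id by (intro exI[of _ l] exI[of _ id]) simp
    ultimately show ?thesis by blast
  qed
qed


end
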